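(* Let $s\in(0,2]$, $P$ a finite set of $n$ points in $(\mathbb{R}^d,\ell_s)$ and $\varepsilon>0$. In the exact nearest neighbor query procedure described in the context, the expected running time of step (2) is $$\tilde O\!\left(\frac{n^{\varrho'}}{p_1}\left(\frac{1}{\ln(1/p_2')}+1\right)+\frac{n^\alpha}{p_1}\,|\varepsilon(2+\varepsilon)\text{-}\mathrm{NN}_P(q)|\right),$$ where $\varrho'=\frac{\ln p_1}{\ln p_2'}$ and $\alpha=\varrho'\left(1-\frac{\ln p_0}{\ln p_1}\right)$, with $p_0=\Phi(\frac{1}{1+\varepsilon})$, $p_1=\Phi(1)$, $p_2'=\Phi(((1+\varepsilon)^s+(1+\varepsilon)^{-s}-1)^{1/s})$.
   Context: $\mathrm{d}$ is the $\ell_s$ distance; $\mathrm{d}(x,P)=\min\{\mathrm{d}(x,p):p\in P\setminus\{x\}\}$; $N_P(x,R)$ is the set of $p\in P\setminus\{x\}$ with $\mathrm{d}(x,p)\le R$; for $\delta>0$, $\delta\text{-}\mathrm{NN}_P(x)=N_P(x,(1+\delta)\mathrm{d}(x,P))$. $\Phi$: fix an $s$-stable distribution $D$ (i.e. for i.i.d. $X_i\sim D$, $\sum\alpha_iX_i$ has the law of $(\sum|\alpha_i|^s)^{1/s}X$, $X\sim D$) and $w>0$; hash functions are $f_{a,b}(x)=\lfloor(a\cdot x+b)/w\rfloor$ with $a$ having i.i.d. $D$ coordinates and $b$ uniform on $[0,w)$; $\Phi(l)=\int_0^w\frac1l f_D(t/l)(1-t/w)dt$ is the collision probability of two points at distance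 $l$, where $f_D$ is the density of $|X|$, $X\sim D$. Ingredients. (1) An $\varepsilon$-approximate nearest neighbor structure $\mathcal{T}(P,\varepsilon)$ (Har-Peled's tree of LSH $(r,\varepsilon)$-PLEB structures) which fixes a finite set of candidate radii and, given $q$, outputs one of them, $r$, with $\mathrm{d}(q,P)\le r\le(1+\varepsilon)\mathrm{d}(q,P)$ with probability at least $1-1/n$. (2) For each candidate radius $r$, the structure $\mathcal{A}'(P,r,\varepsilon)$: with $r'=r(1+\frac{1}{(1+\varepsilon)^s-1})^{1/s}$ and $\varepsilon'=((1+\varepsilon)^s+(1+\varepsilon)^{-s}-1)^{1/s}-1$, lift $P$ to $\mathbb{R}^{d+1}$ with last coordinate $0$ and rescale by $1/r'$; with $\pi_1=\Phi(1)$, $\pi_2=\Phi(1+\varepsilon')$, $\varrho'=\ln\pi_1/\ln\pi_2$, $k=\lceil\ln n/\ln(1/\pi_2)\rceil$, $L=\lceil n^{\varrho'}/\pi_1\rceil$, for $\lceil c\ln n\rceil$ rounds draw $L$ vectors $g_j$ of $k$ independent $f_{a,b}$ and hash the lifted points into table $H_j$ by $g_j$. A query lifts $q$ with last coordinate $r/((1+\varepsilon)^s-1)^{1/s}$, rescales by $1/r'$, collects all colliding points over all tables and rounds, keeps those within distance $1$, and returns their preimages. Query procedure: (1) answer an $\varepsilon$-NN query with $\mathcal{T}(P,\varepsilon)$, obtaining $r$; (2) answer the exhaustive $r$-PLEB query with $\mathcal{A}'(P,r,\varepsilon)$, obtaining $S$; (3) return the point of $S$ closest to $q$ (arbitrary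 point of $P$ if $S=\emptyset$). Distance computations and hash evaluations have unit cost; $\tilde O$ hides factors polylogarithmic in $n/\varepsilon$. *)

theory Defs
  imports "HOL-Probability.Probability"
begin

text \<open>Points of R^d are functions nat => real whose coordinates >= d are 0.\<close>

definition ldist :: "real \<Rightarrow> nat \<Rightarrow> (nat \<Rightarrow> real) \<Rightarrow> (nat \<Rightarrow> real) \<Rightarrow> real" where
  "ldist s d x y = (\<Sum>i<d. \<bar>x i - y i\<bar> powr s) powr (1 / s)"

definition nn_dist :: "real \<Rightarrow> nat \<Rightarrow> (nat \<Rightarrow> real) set \<Rightarrow> (nat \<Rightarrow> real) \<Rightarrow> real" where
  "nn_dist s d P x = Min (ldist s d x ` (P - {x}))"

definition nbhd :: "real \<Rightarrow> nat \<Rightarrow> (nat \<Rightarrow> real) set \<Rightarrow> (nat \<Rightarrow> real) \<Rightarrow> real \<Rightarrow> (nat \<Rightarrow> real) set" where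
  "nbhd s d P x R = {p \<in> P - {x}. ldist s d x p \<le> R}"

definition approx_NN :: "real \<Rightarrow> nat \<Rightarrow> (nat \<Rightarrow> real) set \<Rightarrow> real \<Rightarrow> (nat \<Rightarrow> real) \<Rightarrow> (nat \<Rightarrow> real) set" where
  "approx_NN s d P \<delta> x = nbhd s d P x ((1 + \<delta>) * nn_dist s d P x)"

definition s_stable :: "real \<Rightarrow> real measure \<Rightarrow> bool" where
  "s_stable s D \<longleftrightarrow> prob_space D \<and> sets D = sets borel \<and>
     (\<forall>(m::nat) (\<alpha>::nat \<Rightarrow> real).
        distr (PiM {..<m} (\<lambda>_. D)) borel (\<lambda>x. \<Sum>i<m. \<alpha> i * x i)
        = distr D borel (\<lambda>x. (\<Sum>i<m. \<bar>\<alpha> i\<bar> powr s) powr (1 / s) * x))"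

definition abs_density :: "real measure \<Rightarrow> (real \<Rightarrow> real) \<Rightarrow> bool" where
  "abs_density D f \<longleftrightarrow> f \<in> borel_measurable borel \<and> (\<forall>t. 0 \<le> f t) \<and>
     distr D borel abs = density lborel (\<lambda>t. ennreal (f t))"

definition Phi :: "(real \<Rightarrow> real) \<Rightarrow> real \<Rightarrow> real \<Rightarrow> real" where
  "Phi f w l = set_lebesgue_integral lborel {0..w} (\<lambda>t. (1 / l) * f (t / l) * (1 - t / w))"

definition hash_measure :: "real measure \<Rightarrow> nat \<Rightarrow> real \<Rightarrow> ((nat \<Rightarrow> real) \<times> real) measure" where
  "hash_measure D d w = pair_measure (PiM {..<Suc d} (\<lambda>_. D)) (uniform_measure lborel {0..<w})"

definition hashval :: "real \<Rightarrow> nat \<Rightarrow> (nat \<Rightarrow> real) \<times> real \<Rightarrow> (nat \<Rightarrow> real) \<Rightarrow> int" where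
  "hashval w d ab x = \<lfloor>((\<Sum>i<Suc d. fst ab i * x i) + snd ab) / w\<rfloor>"

definition lift :: "nat \<Rightarrow> real \<Rightarrow> (nat \<Rightarrow> real) \<Rightarrow> (nat \<Rightarrow> real)" where
  "lift d h x = (\<lambda>i. if i < d then x i else if i = d then h else 0)"

definition rescale :: "real \<Rightarrow> (nat \<Rightarrow> real) \<Rightarrow> (nat \<Rightarrow> real)" where
  "rescale c x = (\<lambda>i. x i / c)"

text \<open>Expected cost of the exhaustive r-PLEB query of A'(P,r,eps) at q:
  hash evaluations of the query (R*L*k) plus one distance computation per colliding point
  in each table of each round (counted with multiplicity).\<close>
definition A_query_cost ::
  "real \<Rightarrow> real measure \<Rightarrow> (real \<Rightarrow> real) \<Rightarrow> real \<Rightarrow> real \<Rightarrow> nat \<Rightarrow> (nat \<Rightarrow> real) set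
   \<Rightarrow> real \<Rightarrow> real \<Rightarrow> (nat \<Rightarrow> real) \<Rightarrow> ennreal" where
  "A_query_cost s D f w c d P \<epsilon> r q =
    (let n = real (card P);
         r' = r * (1 + 1 / ((1 + \<epsilon>) powr s - 1)) powr (1 / s);
         \<epsilon>' = ((1 + \<epsilon>) powr s + (1 + \<epsilon>) powr (- s) - 1) powr (1 / s) - 1;
         \<pi>1 = Phi f w 1;
         \<pi>2 = Phi f w (1 + \<epsilon>');
         \<rho> = ln \<pi>1 / ln \<pi>2;
         k = nat \<lceil>ln n / ln (1 / \<pi>2)\<rceil>;
         L = nat \<lceil>n powr \<rho> / \<pi>1\<rceil>;
         R = nat \<lceil>c * ln n\<rceil>;
         P' = (\<lambda>p. rescale r' (lift d 0 p));
         q' = rescale r' (lift d (r / ((1 + \<epsilon>) powr s - 1) powr (1 / s)) q)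
     in \<integral>\<^sup>+ H. ennreal (real (R * L * k) +
            (\<Sum>ij\<in>{..<R} \<times> {..<L}.
               real (card {p \<in> P. \<forall>m<k. hashval w d (H ij m) (P' p) = hashval w d (H ij m) q'})))
        \<partial>(PiM ({..<R} \<times> {..<L}) (\<lambda>_. PiM {..<k} (\<lambda>_. hash_measure D d w))))"

text \<open>Expected running time of step (2): the radius r is the (random) output of the
  eps-NN structure T, independent of the hash functions of A'.\<close>
definition step2_time ::
  "real \<Rightarrow> real measure \<Rightarrow> (real \<Rightarrow> real) \<Rightarrow> real \<Rightarrow> real \<Rightarrow> nat \<Rightarrow> (nat \<Rightarrow> real) set
   \<Rightarrow> real \<Rightarrow> real pmf \<Rightarrow> (nat \<Rightarrow> real) \<Rightarrow> ennreal" where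
  "step2_time s D f w c d P \<epsilon> T q = (\<integral>\<^sup>+ r. A_query_cost s D f w c d P \<epsilon> r q \<partial>(measure_pmf T))"

end

theory Submission
  imports Defs
begin

locale hs =
  fixes s w :: real and D :: "real measure" and f :: "real \<Rightarrow> real"
  assumes s_pos: "0 < s" and stab: "s_stable s D" and dens: "abs_density D f" and w_pos: "0 < w"
begin

definition G :: "real \<Rightarrow> ennreal" where
  "G l = (\<integral>\<^sup>+ x. ennreal (max 0 (1 - l * \<bar>x\<bar> / w)) \<partial>D)"

lemma probD: "prob_space D" using stab unfolding s_stable_def by auto
lemma setsD: "sets D = sets borel" using stab unfolding s_stable_def by auto
lemma measD[measurable_cong]: "sets D = sets borel" by (rule setsD)
lemma f_meas[measurable]: "f \<in> borel_measurable borel" using dens unfolding abs_density_def by auto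
lemma f_nn: "0 \<le> f t" using dens unfolding abs_density_def by auto
lemma distr_abs: "distr D borel abs = density lborel (\<lambda>t. ennreal (f t))"
  using dens unfolding abs_density_def by auto

lemma G_le1: assumes "0 \<le> l" shows "G l \<le> 1"
proof -
  interpret prob_space D by (rule probD)
  have "G l \<le> (\<integral>\<^sup>+ x. 1 \<partial>D)" unfolding G_def
    by (intro nn_integral_mono) (use w_pos \<open>0 \<le> l\<close> in auto)
  also have "\<dots> = 1" using emeasure_space_1 by simp
  finally show ?thesis .
qed

lemma G_mono: "0 \<le> l \<Longrightarrow> l \<le> l' \<Longrightarrow> G l' \<le> G l"
  unfolding G_def
proof (intro nn_integral_mono)
  fix x assume "0 \<le> l" "l \<le> l'"
  then have "l * \<bar>x\<bar> \<le> l' * \<bar>x\<bar>" by (simp add: mult_right_mono)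
  then have "1 - l' * \<bar>x\<bar> / w \<le> 1 - l * \<bar>x\<bar> / w" using w_pos by (simp add: divide_right_mono)
  then show "ennreal (max 0 (1 - l' * \<bar>x\<bar> / w)) \<le> ennreal (max 0 (1 - l * \<bar>x\<bar> / w))"
    by (intro ennreal_leI) auto
qed

lemma Phi_G: assumes l: "0 < l" shows "ennreal (Phi f w l) = G l"
proof -
  define g where "g t = indicator {0..w} t * ((1/l) * f (t/l) * (1 - t/w))" for t :: real
  define h where "h u = indicator {0..w} (l*u) * (1 - l*u/w)" for u :: real
  have g_nn: "0 \<le> g t" for t using f_nn[of "t/l"] l w_pos
    by (auto simp: g_def indicator_def field_simps intro: mult_right_mono)
  have h_nn: "0 \<le> h t" for t using l w_pos
    by (auto simp: h_def indicator_def field_simps)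
  have gm[measurable]: "g \<in> borel_measurable borel" unfolding g_def by measurable
  have hm[measurable]: "h \<in> borel_measurable borel" unfolding h_def by measurable
  have "(\<integral>\<^sup>+ t. ennreal (g t) \<partial>lborel) = ennreal \<bar>l\<bar> * (\<integral>\<^sup>+ u. ennreal (g (0 + l * u)) \<partial>lborel)"
    by (rule nn_integral_real_affine) (use l in auto)
  also have "\<dots> = (\<integral>\<^sup>+ u. ennreal (f u) * ennreal (h u) \<partial>lborel)"
  proof -
    have "ennreal \<bar>l\<bar> * ennreal (g (0 + l * u)) = ennreal (f u) * ennreal (h u)" for u
    proof -
      have "\<bar>l\<bar> * g (0 + l * u) = f u * h u" using l by (simp add: g_def h_def)
      then show ?thesis using l f_nn[of u] h_nn[of u] g_nn[of "l*u"]
        by (simp add: ennreal_mult[symmetric])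
    qed
    then show ?thesis by (simp add: nn_integral_cmult[symmetric])
  qed
  also have "\<dots> = (\<integral>\<^sup>+ u. ennreal (h u) \<partial>density lborel (\<lambda>t. ennreal (f t)))"
    by (simp add: nn_integral_density)
  also have "\<dots> = (\<integral>\<^sup>+ u. ennreal (h u) \<partial>distr D borel abs)" by (simp add: distr_abs)
  also have "\<dots> = (\<integral>\<^sup>+ x. ennreal (h \<bar>x\<bar>) \<partial>D)"
    by (rule nn_integral_distr) auto
  also have "\<dots> = G l" unfolding G_def
  proof (intro nn_integral_cong)
    fix x show "ennreal (h \<bar>x\<bar>) = ennreal (max 0 (1 - l * \<bar>x\<bar> / w))"
    proof -
      have "h \<bar>x\<bar> = max 0 (1 - l * \<bar>x\<bar> / w)"
      proof (cases "l * \<bar>x\<bar> \<le> w")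
        case True then show ?thesis using l w_pos by (auto simp: h_def indicator_def field_simps)
      next
        case False
        then have "1 - l * \<bar>x\<bar> / w < 0" using w_pos by (simp add: field_simps)
        then show ?thesis using False by (auto simp: h_def indicator_def)
      qed
      then show ?thesis by simp
    qed
  qed
  finally have eq: "(\<integral>\<^sup>+ t. ennreal (g t) \<partial>lborel) = G l" .
  have "integrable lborel g"
    by (rule integrableI_nonneg) (use eq G_le1[of l] l g_nn in \<open>auto simp: top_unique less_top[symmetric]\<close>)
  then have "(\<integral>\<^sup>+ t. ennreal (g t) \<partial>lborel) = ennreal (integral\<^sup>L lborel g)"
    by (rule nn_integral_eq_integral) (use g_nn in auto)
  moreover have "Phi f w l = integral\<^sup>L lborel g"
    unfolding Phi_def set_lebesgue_integral_def g_def by simp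
  ultimately show ?thesis using eq by simp
qed

end

context hs begin

lemma absdiv_aux: fixes u v c :: real assumes c: "0 < c" and h: "\<bar>u/c - v/c\<bar> < 1" shows "\<bar>u - v\<bar> < c"
proof -
  have "u/c - v/c = (u-v)/c" by (simp add: diff_divide_distrib)
  then have "\<bar>u - v\<bar> / c < 1" using h c by simp
  then show ?thesis using c by (simp add: pos_divide_less_eq)
qed

lemma spaceD: "space D = UNIV" using sets_eq_imp_space_eq[OF setsD] by simp

lemma exists_pos_cell:
  assumes eta: "0 < \<eta>"
  shows "\<exists>j::int. 0 < emeasure D {y. \<lfloor>y / \<eta>\<rfloor> = j}"
proof (rule ccontr)
  interpret prob_space D by (rule probD)
  assume "\<not> ?thesis"
  then have z: "emeasure D {y. \<lfloor>y / \<eta>\<rfloor> = j} = 0" for j by (simp add: not_less)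
  define J where "J n = (if even n then int (n div 2) else - int (n div 2) - 1)" for n :: nat
  define N where "N n = {y. \<lfloor>y / \<eta>\<rfloor> = J n}" for n
  have U0: "y \<in> \<Union> (range N)" for y
  proof -
    define j where "j = \<lfloor>y / \<eta>\<rfloor>"
    show "y \<in> \<Union> (range N)"
    proof (cases "0 \<le> j")
      case True
      then have "J (2 * nat j) = j" by (simp add: J_def)
      then show ?thesis by (auto simp: N_def j_def intro!: exI[of _ "2 * nat j"])
    next
      case False
      then have "J (2 * nat (-j-1) + 1) = j" by (simp add: J_def)
      then show ?thesis by (auto simp: N_def j_def intro!: exI[of _ "2 * nat (-j-1) + 1"])
    qed
  qed
  have U: "\<Union> (range N) = UNIV" using U0 by blast
  have "emeasure D (\<Union> (range N)) = 0"
    by (rule emeasure_UN_eq_0) (auto simp: N_def z setsD)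
  then have "emeasure D (space D) = 0" using U spaceD by simp
  then show False using emeasure_space_1 by simp
qed

lemma mass_near0:
  assumes "0 < \<delta>" shows "0 < emeasure D {x. \<bar>x\<bar> < \<delta>}"
proof -
  interpret prob_space D by (rule probD)
  define \<alpha> where "\<alpha> i = (if i = (0::nat) then 1 else -1::real)" for i
  define K where "K = (\<Sum>i<(2::nat). \<bar>\<alpha> i\<bar> powr s) powr (1 / s)"
  have K: "K = 2 powr (1/s)" by (simp add: K_def \<alpha>_def numeral_2_eq_2)
  have Kpos: "0 < K" by (simp add: K)
  have st: "distr (PiM {..<2::nat} (\<lambda>_. D)) borel (\<lambda>x. \<Sum>i<(2::nat). \<alpha> i * x i) = distr D borel (\<lambda>x. K * x)"
    using stab unfolding s_stable_def K_def by blast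
  define \<eta> where "\<eta> = K * \<delta>"
  have eta: "0 < \<eta>" using Kpos assms by (simp add: \<eta>_def)
  obtain j where j: "0 < emeasure D {y. \<lfloor>y / (\<eta>/2)\<rfloor> = j}"
    using exists_pos_cell[of "\<eta>/2"] eta by auto
  define A where "A = {y. \<lfloor>y / (\<eta>/2)\<rfloor> = j}"
  have A_sets: "A \<in> sets D" by (simp add: A_def setsD)
  interpret ps: product_prob_space "\<lambda>_::nat. D" by unfold_locales
  have "emeasure (PiM {..<2::nat} (\<lambda>_. D)) (Pi\<^sub>E {..<2::nat} (\<lambda>_. A)) = (\<Prod>i<(2::nat). emeasure D A)"
    by (rule ps.emeasure_PiM) (auto simp: A_sets)
  also have "\<dots> = emeasure D A * emeasure D A" by (simp add: numeral_2_eq_2)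
  finally have p1: "0 < emeasure (PiM {..<2::nat} (\<lambda>_. D)) (Pi\<^sub>E {..<2::nat} (\<lambda>_. A))"
    using j by (simp add: A_def ennreal_zero_less_mult_iff)
  have sub: "Pi\<^sub>E {..<2::nat} (\<lambda>_. A) \<subseteq> {x \<in> space (PiM {..<2::nat} (\<lambda>_. D)). \<bar>\<Sum>i<(2::nat). \<alpha> i * x i\<bar> < \<eta>}"
  proof
    fix x assume x: "x \<in> Pi\<^sub>E {..<2::nat} (\<lambda>_. A)"
    have a0: "x 0 \<in> A" using x by (rule PiE_mem) simp
    have a1: "x 1 \<in> A" using x by (rule PiE_mem) simp
    note a = a0 a1
    have fl: "\<bar>a - b\<bar> < 1" if "\<lfloor>a\<rfloor> = \<lfloor>b\<rfloor>" for a b :: real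
      using that floor_correct[of a] floor_correct[of b] by linarith
    have "\<bar>x 0 / (\<eta>/2) - x 1 / (\<eta>/2)\<bar> < 1" using a unfolding A_def by (intro fl) simp
    then have "\<bar>x 0 - x 1\<bar> < \<eta>/2" by (rule absdiv_aux[rotated]) (simp add: eta)
    moreover have "(\<Sum>i<(2::nat). \<alpha> i * x i) = x 0 - x 1" by (simp add: \<alpha>_def numeral_2_eq_2)
    ultimately have "\<bar>\<Sum>i<(2::nat). \<alpha> i * x i\<bar> < \<eta>" using eta by simp
    moreover have "x \<in> space (PiM {..<2::nat} (\<lambda>_. D))" using x by (auto simp: space_PiM spaceD)
    ultimately show "x \<in> {x \<in> space (PiM {..<2::nat} (\<lambda>_. D)). \<bar>\<Sum>i<(2::nat). \<alpha> i * x i\<bar> < \<eta>}" by simp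
  qed
  have lm: "(\<lambda>x. \<Sum>i<(2::nat). \<alpha> i * x i) \<in> borel_measurable (PiM {..<2::nat} (\<lambda>_. D))"
    by measurable
  have bs: "{z::real. \<bar>z\<bar> < \<eta>} \<in> sets borel" by measurable
  have "emeasure (PiM {..<2::nat} (\<lambda>_. D)) {x \<in> space (PiM {..<2::nat} (\<lambda>_. D)). \<bar>\<Sum>i<(2::nat). \<alpha> i * x i\<bar> < \<eta>}
      = emeasure (distr (PiM {..<2::nat} (\<lambda>_. D)) borel (\<lambda>x. \<Sum>i<(2::nat). \<alpha> i * x i)) {z. \<bar>z\<bar> < \<eta>}"
    using emeasure_distr[OF lm bs] by (simp add: vimage_def Int_def conj_commute)
  also have "\<dots> = emeasure (distr D borel (\<lambda>x. K * x)) {z. \<bar>z\<bar> < \<eta>}" by (simp add: st)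
  also have "\<dots> = emeasure D {x. \<bar>K * x\<bar> < \<eta>}"
  proof -
    have km: "(\<lambda>x. K * x) \<in> D \<rightarrow>\<^sub>M borel" by measurable
    show ?thesis using emeasure_distr[OF km bs] by (simp add: vimage_def spaceD)
  qed
  also have "{x. \<bar>K * x\<bar> < \<eta>} = {x. \<bar>x\<bar> < \<delta>}" using Kpos by (auto simp: \<eta>_def abs_mult)
  finally have "emeasure (PiM {..<2::nat} (\<lambda>_. D)) {x \<in> space (PiM {..<2::nat} (\<lambda>_. D)). \<bar>\<Sum>i<(2::nat). \<alpha> i * x i\<bar> < \<eta>} = emeasure D {x. \<bar>x\<bar> < \<delta>}" .
  moreover have "emeasure (PiM {..<2::nat} (\<lambda>_. D)) (Pi\<^sub>E {..<2::nat} (\<lambda>_. A)) \<le> emeasure (PiM {..<2::nat} (\<lambda>_. D)) {x \<in> space (PiM {..<2::nat} (\<lambda>_. D)). \<bar>\<Sum>i<(2::nat). \<alpha> i * x i\<bar> < \<eta>}"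
  proof (rule emeasure_mono[OF sub])
    show "{x \<in> space (PiM {..<2::nat} (\<lambda>_. D)). \<bar>\<Sum>i<(2::nat). \<alpha> i * x i\<bar> < \<eta>} \<in> sets (PiM {..<2::nat} (\<lambda>_. D))"
      using lm by measurable
  qed
  ultimately show ?thesis using p1 by simp
qed

end

context hs begin

lemma AE_nz: "AE x in D. x \<noteq> 0"
proof -
  have "AE x in lborel. x \<noteq> (0::real)" by (rule AE_lborel_singleton)
  then have "AE x in density lborel (\<lambda>t. ennreal (f t)). x \<noteq> 0"
    by (subst AE_density) (auto elim: AE_mp)
  then have "AE x in distr D borel abs. x \<noteq> 0" by (simp only: distr_abs)
  then have "AE x in D. \<bar>x\<bar> \<noteq> (0::real)" by (rule AE_distrD[rotated]) simp
  then show ?thesis by simp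
qed

lemma G_lt1: assumes l: "0 < l" shows "G l < 1"
proof (rule ccontr)
  interpret prob_space D by (rule probD)
  assume "\<not> G l < 1"
  then have G1: "G l = 1" using G_le1[of l] l by (simp add: not_less)
  define u where "u x = ennreal (max 0 (1 - l * \<bar>x\<bar> / w))" for x
  define v where "v x = ennreal (min 1 (l * \<bar>x\<bar> / w))" for x
  have um[measurable]: "u \<in> borel_measurable D" unfolding u_def by measurable
  have vm[measurable]: "v \<in> borel_measurable D" unfolding v_def by measurable
  have uv: "u x + v x = 1" for x
  proof -
    have nn: "0 \<le> l * \<bar>x\<bar> / w" using l w_pos by simp
    have "max 0 (1 - l * \<bar>x\<bar> / w) + min 1 (l * \<bar>x\<bar> / w) = 1" by linarith
    moreover have "u x + v x = ennreal (max 0 (1 - l * \<bar>x\<bar> / w) + min 1 (l * \<bar>x\<bar> / w))"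
      unfolding u_def v_def using nn by (subst ennreal_plus) auto
    ultimately show ?thesis by simp
  qed
  have "(\<integral>\<^sup>+ x. u x \<partial>D) + (\<integral>\<^sup>+ x. v x \<partial>D) = (\<integral>\<^sup>+ x. u x + v x \<partial>D)"
    by (rule nn_integral_add[symmetric]) auto
  also have "\<dots> = 1" using uv emeasure_space_1 by simp
  finally have "1 + (\<integral>\<^sup>+ x. v x \<partial>D) = 1" using G1 by (simp add: G_def u_def)
  then have "(\<integral>\<^sup>+ x. v x \<partial>D) = 0"
    using ennreal_add_left_cancel[of 1 "\<integral>\<^sup>+ x. v x \<partial>D" 0] by simp
  then have "AE x in D. v x = 0" by (subst (asm) nn_integral_0_iff_AE) auto
  then have "AE x in D. x = 0"
  proof (rule AE_mp, intro AE_I2 impI)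
    fix x assume "v x = 0"
    then have "min 1 (l * \<bar>x\<bar> / w) \<le> 0" unfolding v_def by (simp only: ennreal_eq_0_iff)
    show "x = 0"
    proof (rule ccontr)
      assume "x \<noteq> 0"
      then have "0 < l * \<bar>x\<bar> / w" using l w_pos by simp
      then show False using \<open>min 1 (l * \<bar>x\<bar> / w) \<le> 0\<close> by linarith
    qed
  qed
  with AE_nz have "AE x in D. False" by eventually_elim auto
  then show False by simp
qed

lemma G_pos: assumes l: "0 < l" shows "0 < G l"
proof -
  define \<delta> where "\<delta> = w / (2 * l)"
  have dpos: "0 < \<delta>" using l w_pos by (simp add: \<delta>_def)
  have le: "(\<integral>\<^sup>+ x. ennreal (1/2) * indicator {x. \<bar>x\<bar> < \<delta>} x \<partial>D) \<le> G l"
    unfolding G_def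
  proof (intro nn_integral_mono)
    fix x
    show "ennreal (1/2) * indicator {x. \<bar>x\<bar> < \<delta>} x \<le> ennreal (max 0 (1 - l * \<bar>x\<bar> / w))"
    proof (cases "\<bar>x\<bar> < \<delta>")
      case True
      then have "l * \<bar>x\<bar> < l * \<delta>" using l by simp
      also have "l * \<delta> = w / 2" using l by (simp add: \<delta>_def)
      finally have "l * \<bar>x\<bar> / w < 1/2" using w_pos by (simp add: divide_less_eq)
      then have "1/2 \<le> 1 - l * \<bar>x\<bar> / w" by linarith
      then have "1/2 \<le> max 0 (1 - l * \<bar>x\<bar> / w)" by (rule order.trans[OF _ max.cobounded2])
      then have "ennreal (1/2) \<le> ennreal (max 0 (1 - l * \<bar>x\<bar> / w))" by (rule ennreal_leI)
      moreover have "ennreal (1/2) * indicator {x. \<bar>x\<bar> < \<delta>} x = ennreal (1/2)" using True by simp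
      ultimately show ?thesis by (simp only:)
    qed simp
  qed
  have eq: "(\<integral>\<^sup>+ x. ennreal (1/2) * indicator {x. \<bar>x\<bar> < \<delta>} x \<partial>D) = ennreal (1/2) * emeasure D {x. \<bar>x\<bar> < \<delta>}"
    by (rule nn_integral_cmult_indicator) (simp add: setsD)
  have pos: "0 < ennreal (1/2) * emeasure D {x. \<bar>x\<bar> < \<delta>}"
  proof -
    have "0 < ennreal (1/2)" by (simp only: ennreal_less_zero_iff)
    then show ?thesis using mass_near0[OF dpos] unfolding ennreal_zero_less_mult_iff by blast
  qed
  show ?thesis using le pos unfolding eq by (rule order.strict_trans2[rotated])
qed
end


lemma floor_mul:
  fixes x w :: real assumes w: "0 < w"
  shows "real_of_int \<lfloor>x/w\<rfloor> * w \<le> x" "x < (real_of_int \<lfloor>x/w\<rfloor> + 1) * w"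
proof -
  have h: "real_of_int \<lfloor>x/w\<rfloor> \<le> x/w" by (rule of_int_floor_le)
  show "real_of_int \<lfloor>x/w\<rfloor> * w \<le> x" using mult_right_mono[OF h, of w] w by simp
  have h2: "x/w < real_of_int \<lfloor>x/w\<rfloor> + 1" by (rule real_of_int_floor_add_one_gt)
  show "x < (real_of_int \<lfloor>x/w\<rfloor> + 1) * w" using mult_strict_right_mono[OF h2 w] w by simp
qed

lemma coll_set_le:
  fixes u v w :: real
  assumes w: "0 < w" and uv: "u \<le> v"
  shows "emeasure lborel ({0..<w} \<inter> {b. \<lfloor>(u+b)/w\<rfloor> = \<lfloor>(v+b)/w\<rfloor>}) \<le> ennreal (max 0 (w - (v - u)))"
proof -
  define \<delta> where "\<delta> = v - u"
  define K where "K = \<lfloor>u/w\<rfloor>"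
  define c1 where "c1 = w * (real_of_int K + 1) - u"
  have Kle: "real_of_int K * w \<le> u" and Klt: "u < (real_of_int K + 1) * w"
    using floor_mul[OF w, of u] unfolding K_def by auto
  define C where "C = {0..<w} \<inter> {b. \<lfloor>(u+b)/w\<rfloor> = \<lfloor>(v+b)/w\<rfloor>}"
  have key: "b < c1 - \<delta> \<or> (c1 \<le> b \<and> b < c1 + w - \<delta>)" if b: "b \<in> C" for b
  proof -
    define N where "N = \<lfloor>(u+b)/w\<rfloor>"
    have b0: "0 \<le> b" "b < w" and eqN: "\<lfloor>(v+b)/w\<rfloor> = N" using b by (auto simp: C_def N_def)
    have N1: "real_of_int N * w \<le> u + b" "u + b < (real_of_int N + 1) * w"
      using floor_mul[OF w, of "u+b"] unfolding N_def by auto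
    have N2: "v + b < (real_of_int N + 1) * w"
      using floor_mul[OF w, of "v+b"] eqN by auto
    have "real_of_int N * w < (real_of_int K + 2) * w" using N1 Klt b0 by (simp add: algebra_simps)
    then have "N < K + 2" using w by (simp del: of_int_add add: mult_less_cancel_right)
    moreover have "real_of_int K * w < (real_of_int N + 1) * w" using N1 Kle b0 by (simp add: algebra_simps)
    then have "K < N + 1" using w by (simp del: of_int_add add: mult_less_cancel_right)
    ultimately have "N = K \<or> N = K + 1" by linarith
    then show ?thesis
    proof
      assume "N = K"
      then show ?thesis using N2 by (simp add: c1_def \<delta>_def algebra_simps)
    next
      assume "N = K + 1"
      then show ?thesis using N1 N2 by (simp add: c1_def \<delta>_def algebra_simps)
    qed
  qed
  show ?thesis
  proof (cases "w \<le> \<delta>")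
    case True
    have "C \<subseteq> {}"
    proof
      fix b assume "b \<in> C"
      then have "0 \<le> b" by (auto simp: C_def)
      moreover have "c1 \<le> w" using Kle by (simp add: c1_def algebra_simps)
      ultimately show "b \<in> {}" using key[OF \<open>b \<in> C\<close>] True by linarith
    qed
    then show ?thesis by (simp add: C_def[symmetric])
  next
    case False
    show ?thesis
    proof (cases "\<delta> \<le> c1")
      case True
      have sub: "C \<subseteq> {0..<c1 - \<delta>} \<union> {c1..<w}"
      proof
        fix b assume b: "b \<in> C"
        then have "0 \<le> b" "b < w" by (auto simp: C_def)
        with key[OF b] show "b \<in> {0..<c1 - \<delta>} \<union> {c1..<w}" by auto
      qed
      have "emeasure lborel C \<le> emeasure lborel ({0..<c1 - \<delta>} \<union> {c1..<w})"
        by (rule emeasure_mono[OF sub]) simp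
      also have "\<dots> \<le> emeasure lborel {0..<c1 - \<delta>} + emeasure lborel {c1..<w}"
        by (rule emeasure_subadditive) auto
      also have "\<dots> = ennreal (c1 - \<delta>) + ennreal (w - c1)"
      proof -
        have c1w: "c1 \<le> w" using Kle by (simp add: c1_def algebra_simps)
        have "emeasure lborel {0..<c1 - \<delta>} = ennreal (c1 - \<delta> - 0)"
          by (rule emeasure_lborel_Ico) (use True in simp)
        moreover have "emeasure lborel {c1..<w} = ennreal (w - c1)"
          by (rule emeasure_lborel_Ico) (use c1w in simp)
        ultimately show ?thesis by simp
      qed
      also have "\<dots> = ennreal (w - \<delta>)"
        using True Klt Kle uv by (subst ennreal_plus[symmetric]) (auto simp: c1_def \<delta>_def algebra_simps)
      finally show ?thesis using False by (simp add: C_def \<delta>_def)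
    next
      case F2: False
      have sub: "C \<subseteq> {c1..<c1 + w - \<delta>}"
      proof
        fix b assume b: "b \<in> C"
        then have "0 \<le> b" "b < w" by (auto simp: C_def)
        with key[OF b] F2 show "b \<in> {c1..<c1 + w - \<delta>}" by auto
      qed
      have "emeasure lborel C \<le> emeasure lborel {c1..<c1 + w - \<delta>}"
        by (rule emeasure_mono[OF sub]) simp
      also have "\<dots> = ennreal (w - \<delta>)" using False by simp
      finally show ?thesis using False by (simp add: C_def \<delta>_def)
    qed
  qed
qed


lemma coll_unif:
  fixes u v w :: real assumes w: "0 < w"
  shows "emeasure (uniform_measure lborel {0..<w}) {b. \<lfloor>(u+b)/w\<rfloor> = \<lfloor>(v+b)/w\<rfloor>}
         \<le> ennreal (max 0 (1 - \<bar>u - v\<bar> / w))"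
proof -
  have C: "emeasure lborel ({0..<w} \<inter> {b. \<lfloor>(u+b)/w\<rfloor> = \<lfloor>(v+b)/w\<rfloor>}) \<le> ennreal (max 0 (w - \<bar>u - v\<bar>))"
  proof (cases "u \<le> v")
    case True then show ?thesis using coll_set_le[OF w True] by simp
  next
    case False
    then have "v \<le> u" by simp
    from coll_set_le[OF w this] show ?thesis using False by (simp add: eq_commute)
  qed
  have "emeasure (uniform_measure lborel {0..<w}) {b. \<lfloor>(u+b)/w\<rfloor> = \<lfloor>(v+b)/w\<rfloor>}
     = emeasure lborel ({0..<w} \<inter> {b. \<lfloor>(u+b)/w\<rfloor> = \<lfloor>(v+b)/w\<rfloor>}) / emeasure lborel {0..<w}"
    by (rule emeasure_uniform_measure) auto
  also have "\<dots> \<le> ennreal (max 0 (w - \<bar>u - v\<bar>)) / ennreal w"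
    using C w by (simp add: divide_right_mono_ennreal)
  also have "\<dots> = ennreal (max 0 (w - \<bar>u - v\<bar>) / w)"
    using w by (subst divide_ennreal) auto
  also have "max 0 (w - \<bar>u - v\<bar>) / w = max 0 (1 - \<bar>u - v\<bar> / w)"
    using w by (auto simp: max_def field_simps)
  finally show ?thesis .
qed

context hs begin

lemma prob_PiD: "prob_space (PiM I (\<lambda>_. D))"
  by (rule prob_space_PiM) (rule probD)

lemma unif_prob: "prob_space (uniform_measure lborel {0..<w})"
  by (rule prob_space_uniform_measure) (use w_pos in auto)

lemma coll_hash:
  fixes x y :: "nat \<Rightarrow> real" and d :: nat
  defines "ll \<equiv> (\<Sum>i<Suc d. \<bar>x i - y i\<bar> powr s) powr (1 / s)"
  shows "emeasure (hash_measure D d w) {ab \<in> space (hash_measure D d w). hashval w d ab x = hashval w d ab y} \<le> G ll"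
proof -
  define M where "M = PiM {..<Suc d} (\<lambda>_. D)"
  define U where "U = uniform_measure lborel {0..<w}"
  define X where "X = {ab \<in> space (hash_measure D d w). hashval w d ab x = hashval w d ab y}"
  define h where "h z = ennreal (max 0 (1 - \<bar>z\<bar> / w))" for z :: real
  have hm[measurable]: "h \<in> borel_measurable borel" unfolding h_def by measurable
  interpret U: prob_space U unfolding U_def by (rule unif_prob)
  have Xs: "X \<in> sets (M \<Otimes>\<^sub>M U)"
    unfolding X_def M_def U_def hashval_def hash_measure_def by measurable
  have "emeasure (hash_measure D d w) X = emeasure (M \<Otimes>\<^sub>M U) X"
    by (simp add: hash_measure_def M_def U_def)
  also have "\<dots> = (\<integral>\<^sup>+ a. emeasure U (Pair a -` X) \<partial>M)"
    by (rule U.emeasure_pair_measure_alt[OF Xs])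
  also have "\<dots> \<le> (\<integral>\<^sup>+ a. h (\<Sum>i<Suc d. (x i - y i) * a i) \<partial>M)"
  proof (rule nn_integral_mono)
    fix a assume a: "a \<in> space M"
    define u where "u = (\<Sum>i<Suc d. a i * x i)"
    define v where "v = (\<Sum>i<Suc d. a i * y i)"
    have "Pair a -` X \<subseteq> {b. \<lfloor>(u+b)/w\<rfloor> = \<lfloor>(v+b)/w\<rfloor>}"
      by (auto simp: X_def hashval_def u_def v_def)
    then have "emeasure U (Pair a -` X) \<le> emeasure U {b. \<lfloor>(u+b)/w\<rfloor> = \<lfloor>(v+b)/w\<rfloor>}"
      by (rule emeasure_mono) (simp add: U_def)
    also have "\<dots> \<le> ennreal (max 0 (1 - \<bar>u - v\<bar> / w))"
      unfolding U_def by (rule coll_unif[OF w_pos])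
    also have "u - v = (\<Sum>i<Suc d. (x i - y i) * a i)"
      by (simp add: u_def v_def sum_subtractf[symmetric] algebra_simps)
    finally show "emeasure U (Pair a -` X) \<le> h (\<Sum>i<Suc d. (x i - y i) * a i)"
      by (simp add: h_def)
  qed
  also have "\<dots> = (\<integral>\<^sup>+ z. h z \<partial>distr M borel (\<lambda>a. \<Sum>i<Suc d. (x i - y i) * a i))"
    by (rule nn_integral_distr[symmetric]) (auto simp: M_def)
  also have "distr M borel (\<lambda>a. \<Sum>i<Suc d. (x i - y i) * a i) = distr D borel (\<lambda>t. ll * t)"
  proof -
    have "\<forall>(m::nat) (\<alpha>::nat \<Rightarrow> real). distr (PiM {..<m} (\<lambda>_. D)) borel (\<lambda>x. \<Sum>i<m. \<alpha> i * x i)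
        = distr D borel (\<lambda>x. (\<Sum>i<m. \<bar>\<alpha> i\<bar> powr s) powr (1 / s) * x)"
      using stab unfolding s_stable_def by blast
    from this[rule_format, of "Suc d" "\<lambda>i. x i - y i"] show ?thesis
      unfolding M_def ll_def .
  qed
  also have "(\<integral>\<^sup>+ z. h z \<partial>distr D borel (\<lambda>t. ll * t)) = (\<integral>\<^sup>+ t. h (ll * t) \<partial>D)"
    by (rule nn_integral_distr) auto
  also have "\<dots> = G ll"
    unfolding G_def h_def
  proof (rule nn_integral_cong)
    fix t
    have "0 \<le> ll" unfolding ll_def by simp
    then show "ennreal (max 0 (1 - \<bar>ll * t\<bar> / w)) = ennreal (max 0 (1 - ll * \<bar>t\<bar> / w))"
      by (simp add: abs_mult)
  qed
  finally show ?thesis unfolding X_def .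
qed

end


lemma PiE_coll_eq:
  fixes k :: nat shows
  "{H \<in> space (PiM {..<k} (\<lambda>_. M)). \<forall>m<k. Q (H m)} = PiE {..<k} (\<lambda>_. {ab \<in> space M. Q ab})"
  by (auto simp: space_PiM PiE_iff extensional_def)

context hs begin

lemma hash_prob: "prob_space (hash_measure D d w)"
  unfolding hash_measure_def by (intro prob_space_pair prob_PiD unif_prob)

lemma coll_sets: "{ab \<in> space (hash_measure D d w). hashval w d ab x = hashval w d ab y} \<in> sets (hash_measure D d w)"
  unfolding hashval_def hash_measure_def by measurable

lemma collk_sets:
  fixes k :: nat
  shows
  "{H \<in> space (PiM {..<k} (\<lambda>_. hash_measure D d w)). \<forall>m<k. hashval w d (H m) x = hashval w d (H m) y}
    \<in> sets (PiM {..<k} (\<lambda>_. hash_measure D d w))"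
  unfolding PiE_coll_eq[of k "hash_measure D d w" "\<lambda>ab. hashval w d ab x = hashval w d ab y"]
  by (rule sets_PiM_I_finite) (auto intro: coll_sets simp del: lessThan_iff)

lemma coll_k:
  fixes x y :: "nat \<Rightarrow> real" and d k :: nat
  defines "ll \<equiv> (\<Sum>i<Suc d. \<bar>x i - y i\<bar> powr s) powr (1 / s)"
  shows "emeasure (PiM {..<k} (\<lambda>_. hash_measure D d w))
      {H \<in> space (PiM {..<k} (\<lambda>_. hash_measure D d w)). \<forall>m<k. hashval w d (H m) x = hashval w d (H m) y}
    \<le> G ll ^ k"
proof -
  interpret hp: prob_space "hash_measure D d w" by (rule hash_prob)
  interpret pp: product_prob_space "\<lambda>_::nat. hash_measure D d w" by unfold_locales
  have "emeasure (PiM {..<k} (\<lambda>_. hash_measure D d w))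
      (PiE {..<k} (\<lambda>_. {ab \<in> space (hash_measure D d w). hashval w d ab x = hashval w d ab y}))
    = (\<Prod>m<k. emeasure (hash_measure D d w) {ab \<in> space (hash_measure D d w). hashval w d ab x = hashval w d ab y})"
    by (rule pp.emeasure_PiM) (auto intro: coll_sets)
  also have "\<dots> \<le> (\<Prod>m<k. G ll)"
    by (rule prod_mono_ennreal) (unfold ll_def, rule coll_hash)
  finally show ?thesis
    unfolding PiE_coll_eq[of k "hash_measure D d w" "\<lambda>ab. hashval w d ab x = hashval w d ab y"] by simp
qed

end


lemma card_filter_ennreal:
  assumes "finite P"
  shows "ennreal (real (card {p \<in> P. A p})) = (\<Sum>p\<in>P. indicator {p. A p} p)"
proof -
  have "(\<Sum>p\<in>{p \<in> P. A p}. (1::real)) = (\<Sum>p\<in>P. if A p then 1 else 0)"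
    using assms by (rule sum.inter_filter)
  then have "real (card {p \<in> P. A p}) = (\<Sum>p\<in>P. if A p then 1 else 0)" by simp
  moreover have "(\<Sum>p\<in>P. ennreal (if A p then 1 else 0)) = ennreal (\<Sum>p\<in>P. if A p then 1 else 0)"
    by (rule sum_ennreal) simp
  moreover have "(\<Sum>p\<in>P. indicator {p. A p} p) = (\<Sum>p\<in>P. ennreal (if A p then 1 else 0))"
    by (rule sum.cong) (auto simp: indicator_def)
  ultimately show ?thesis by simp
qed

context hs begin

lemma cost_bound:
  fixes R L k d :: nat and P :: "(nat \<Rightarrow> real) set" and P' :: "(nat \<Rightarrow> real) \<Rightarrow> (nat \<Rightarrow> real)"
    and q' :: "nat \<Rightarrow> real" and \<beta> :: "(nat \<Rightarrow> real) \<Rightarrow> ennreal"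
  assumes P: "finite P"
    and \<beta>: "\<And>p. p \<in> P \<Longrightarrow> emeasure (PiM {..<k} (\<lambda>_. hash_measure D d w))
      {H \<in> space (PiM {..<k} (\<lambda>_. hash_measure D d w)). \<forall>m<k. hashval w d (H m) (P' p) = hashval w d (H m) q'}
      \<le> \<beta> p"
  shows "(\<integral>\<^sup>+ H. ennreal (real (R * L * k) +
            (\<Sum>ij\<in>{..<R} \<times> {..<L}.
               real (card {p \<in> P. \<forall>m<k. hashval w d (H ij m) (P' p) = hashval w d (H ij m) q'})))
        \<partial>(PiM ({..<R} \<times> {..<L}) (\<lambda>_. PiM {..<k} (\<lambda>_. hash_measure D d w))))
     \<le> ennreal (real (R * L * k)) + of_nat (R * L) * (\<Sum>p\<in>P. \<beta> p)"
proof -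
  define N where "N = PiM {..<k} (\<lambda>_. hash_measure D d w)"
  define I where "I = {..<R} \<times> {..<L}"
  define MM where "MM = PiM I (\<lambda>_. N)"
  define S where "S p = {H \<in> space N. \<forall>m<k. hashval w d (H m) (P' p) = hashval w d (H m) q'}" for p
  have Ss: "S p \<in> sets N" for p unfolding S_def N_def by (rule collk_sets)
  have fI: "finite I" by (simp add: I_def)
  interpret hp: prob_space "hash_measure D d w" by (rule hash_prob)
  have Np: "prob_space N" unfolding N_def by (rule prob_space_PiM) (rule hash_prob)
  interpret Np: prob_space N by (rule Np)
  have comp: "(\<integral>\<^sup>+ H. indicator (S p) (H ij) \<partial>MM) = emeasure N (S p)" if ij: "ij \<in> I" for ij p
  proof -
    have "(\<integral>\<^sup>+ H. indicator (S p) (H ij) \<partial>MM) = (\<integral>\<^sup>+ h. indicator (S p) h \<partial>distr MM N (\<lambda>H. H ij))"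
      by (rule nn_integral_distr[symmetric]) (auto simp: MM_def ij intro: borel_measurable_indicator Ss)
    also have "distr MM N (\<lambda>H. H ij) = N"
      unfolding MM_def by (rule distr_PiM_component) (auto simp: Np ij)
    finally show ?thesis using Ss by simp
  qed
  have "(\<integral>\<^sup>+ H. ennreal (real (R * L * k) +
            (\<Sum>ij\<in>I. real (card {p \<in> P. \<forall>m<k. hashval w d (H ij m) (P' p) = hashval w d (H ij m) q'}))) \<partial>MM)
      = (\<integral>\<^sup>+ H. ennreal (real (R * L * k)) + (\<Sum>ij\<in>I. \<Sum>p\<in>P. indicator (S p) (H ij)) \<partial>MM)"
  proof (rule nn_integral_cong)
    fix H assume H: "H \<in> space MM"
    have "ennreal (\<Sum>ij\<in>I. real (card {p \<in> P. \<forall>m<k. hashval w d (H ij m) (P' p) = hashval w d (H ij m) q'}))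
       = (\<Sum>ij\<in>I. ennreal (real (card {p \<in> P. \<forall>m<k. hashval w d (H ij m) (P' p) = hashval w d (H ij m) q'})))"
      by (rule sum_ennreal[symmetric]) simp
    also have "\<dots> = (\<Sum>ij\<in>I. \<Sum>p\<in>P. indicator (S p) (H ij))"
    proof (rule sum.cong[OF refl])
      fix ij assume ij: "ij \<in> I"
      then have "H ij \<in> space N" using H by (auto simp: MM_def space_PiM)
      then have "{p \<in> P. \<forall>m<k. hashval w d (H ij m) (P' p) = hashval w d (H ij m) q'} = {p \<in> P. H ij \<in> S p}"
        by (auto simp: S_def)
      then show "ennreal (real (card {p \<in> P. \<forall>m<k. hashval w d (H ij m) (P' p) = hashval w d (H ij m) q'}))
          = (\<Sum>p\<in>P. indicator (S p) (H ij))"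
        using card_filter_ennreal[OF P, of "\<lambda>p. H ij \<in> S p"] by (simp add: indicator_def)
    qed
    finally show "ennreal (real (R * L * k) +
            (\<Sum>ij\<in>I. real (card {p \<in> P. \<forall>m<k. hashval w d (H ij m) (P' p) = hashval w d (H ij m) q'})))
        = ennreal (real (R * L * k)) + (\<Sum>ij\<in>I. \<Sum>p\<in>P. indicator (S p) (H ij))"
      by (subst ennreal_plus) (auto intro!: sum_nonneg)
  qed
  also have "\<dots> = ennreal (real (R * L * k)) + (\<Sum>ij\<in>I. \<Sum>p\<in>P. \<integral>\<^sup>+ H. indicator (S p) (H ij) \<partial>MM)"
  proof -
    have m: "(\<lambda>H. indicator (S p) (H ij) :: ennreal) \<in> borel_measurable MM" if "ij \<in> I" for p ij
      using Ss that unfolding MM_def by measurable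
    have "(\<integral>\<^sup>+ H. ennreal (real (R * L * k)) + (\<Sum>ij\<in>I. \<Sum>p\<in>P. indicator (S p) (H ij)) \<partial>MM)
        = (\<integral>\<^sup>+ H. ennreal (real (R * L * k)) \<partial>MM) + (\<integral>\<^sup>+ H. (\<Sum>ij\<in>I. \<Sum>p\<in>P. indicator (S p) (H ij)) \<partial>MM)"
      by (rule nn_integral_add) (use m in auto)
    also have "(\<integral>\<^sup>+ H. ennreal (real (R * L * k)) \<partial>MM) = ennreal (real (R * L * k))"
    proof -
      interpret MMp: prob_space MM unfolding MM_def by (rule prob_space_PiM) (rule Np)
      show ?thesis using MMp.emeasure_space_1 by simp
    qed
    also have "(\<integral>\<^sup>+ H. (\<Sum>ij\<in>I. \<Sum>p\<in>P. indicator (S p) (H ij)) \<partial>MM)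
        = (\<Sum>ij\<in>I. \<integral>\<^sup>+ H. (\<Sum>p\<in>P. indicator (S p) (H ij)) \<partial>MM)"
      by (rule nn_integral_sum) (use m in auto)
    also have "\<dots> = (\<Sum>ij\<in>I. \<Sum>p\<in>P. \<integral>\<^sup>+ H. indicator (S p) (H ij) \<partial>MM)"
      by (rule sum.cong[OF refl], rule nn_integral_sum) (use m in auto)
    finally show ?thesis .
  qed
  also have "\<dots> = ennreal (real (R * L * k)) + (\<Sum>ij\<in>I. \<Sum>p\<in>P. emeasure N (S p))"
    by (simp add: comp)
  also have "\<dots> \<le> ennreal (real (R * L * k)) + (\<Sum>ij\<in>I. \<Sum>p\<in>P. \<beta> p)"
    by (intro add_left_mono sum_mono) (use \<beta> in \<open>auto simp: S_def N_def\<close>)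
  also have "(\<Sum>ij\<in>I. \<Sum>p\<in>P. \<beta> p) = of_nat (R * L) * (\<Sum>p\<in>P. \<beta> p)"
    by (simp add: I_def card_cartesian_product)
  finally show ?thesis unfolding I_def MM_def N_def .
qed

end


lemma powr_inv_s: fixes X s :: real assumes "0 \<le> X" "0 < s" shows "(X powr (1/s)) powr s = X"
  using assms by (simp add: powr_powr powr_one)

lemma powr_inv_s': fixes X s :: real assumes "0 \<le> X" "0 < s" shows "(X powr s) powr (1/s) = X"
  using assms by (simp add: powr_powr powr_one)

lemma lift_sum:
  fixes s \<epsilon> r :: real and p q :: "nat \<Rightarrow> real" and d :: nat
  assumes s: "0 < s" and \<epsilon>: "0 < \<epsilon>" and r: "0 < r"
  defines "B \<equiv> (1 + \<epsilon>) powr s"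
  defines "r' \<equiv> r * (1 + 1 / ((1 + \<epsilon>) powr s - 1)) powr (1 / s)"
  defines "h \<equiv> r / ((1 + \<epsilon>) powr s - 1) powr (1 / s)"
  shows "(\<Sum>i<Suc d. \<bar>rescale r' (lift d 0 p) i - rescale r' (lift d h q) i\<bar> powr s)
     = ((ldist s d q p) powr s * (B - 1) / r powr s + 1) / B"
proof -
  define A where "A = B - 1"
  have B1: "1 < B" unfolding B_def using s \<epsilon> by (intro gr_one_powr) auto
  have A: "0 < A" using B1 by (simp add: A_def)
  have A_eq: "(1 + \<epsilon>) powr s - 1 = A" by (simp add: A_def B_def)
  define R0 where "R0 = r powr s"
  have R0: "0 < R0" using r by (simp add: R0_def)
  have rp: "r' powr s = R0 * (1 + 1/A)"
    unfolding r'_def A_eq R0_def powr_mult using A s by (simp add: powr_inv_s)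
  have hp: "h powr s = R0 / A"
    unfolding h_def A_eq R0_def powr_divide using A s by (simp add: powr_inv_s)
  have "0 < 1 + 1/A" using A by (simp add: add_pos_pos)
  then have rpos: "0 < r'" unfolding r'_def A_eq using r by (intro mult_pos_pos) auto
  have dd: "(\<Sum>i<d. \<bar>p i - q i\<bar> powr s) = (ldist s d q p) powr s"
    unfolding ldist_def by (subst powr_inv_s) (auto simp: s abs_minus_commute intro: sum_nonneg)
  have "(\<Sum>i<Suc d. \<bar>rescale r' (lift d 0 p) i - rescale r' (lift d h q) i\<bar> powr s)
      = (\<Sum>i<d. \<bar>p i - q i\<bar> powr s / r' powr s) + h powr s / r' powr s"
  proof -
    have "(\<Sum>i<d. \<bar>rescale r' (lift d 0 p) i - rescale r' (lift d h q) i\<bar> powr s)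
        = (\<Sum>i<d. \<bar>p i - q i\<bar> powr s / r' powr s)"
    proof (rule sum.cong[OF refl])
      fix i assume "i \<in> {..<d}"
      then have "rescale r' (lift d 0 p) i - rescale r' (lift d h q) i = (p i - q i) / r'"
        by (simp add: rescale_def lift_def diff_divide_distrib)
      then show "\<bar>rescale r' (lift d 0 p) i - rescale r' (lift d h q) i\<bar> powr s = \<bar>p i - q i\<bar> powr s / r' powr s"
        using rpos by (simp add: powr_divide)
    qed
    moreover have "\<bar>rescale r' (lift d 0 p) d - rescale r' (lift d h q) d\<bar> powr s = h powr s / r' powr s"
    proof -
      have "rescale r' (lift d 0 p) d - rescale r' (lift d h q) d = - (h / r')"
        by (simp add: rescale_def lift_def)
      moreover have "0 \<le> h" unfolding h_def A_eq using r A by simp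
      ultimately show ?thesis using rpos by (simp add: powr_divide)
    qed
    ultimately show ?thesis by simp
  qed
  also have "\<dots> = ((ldist s d q p) powr s + R0 / A) / (R0 * (1 + 1/A))"
    by (simp add: sum_divide_distrib[symmetric] dd rp hp add_divide_distrib)
  also have "\<dots> = ((ldist s d q p) powr s * A / R0 + 1) / B"
    using A R0 by (simp add: A_def field_simps)
  finally show ?thesis by (simp add: A_def R0_def)
qed


lemma ll_lower:
  fixes s \<epsilon> r dd :: real
  assumes s: "0 < s" and \<epsilon>: "0 < \<epsilon>" and r: "0 < r" and dd: "0 \<le> dd"
  defines "B \<equiv> (1 + \<epsilon>) powr s"
  defines "X \<equiv> ((dd powr s) * (B - 1) / r powr s + 1) / B"
  shows "1 / (1 + \<epsilon>) \<le> X powr (1/s)"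
    and "(1 + \<epsilon>) * r < dd \<Longrightarrow> ((1 + \<epsilon>) powr s + (1 + \<epsilon>) powr (- s) - 1) powr (1/s) \<le> X powr (1/s)"
proof -
  have B1: "1 < B" unfolding B_def using s \<epsilon> by (intro gr_one_powr) auto
  have R0: "0 < r powr s" using r by simp
  have t0: "0 \<le> (dd powr s) * (B - 1) / r powr s" using B1 R0 by simp
  have Xge: "1/B \<le> X" unfolding X_def using B1 t0 by (simp add: divide_right_mono)
  have iB: "1/B = (1/(1+\<epsilon>)) powr s" unfolding B_def by (simp add: powr_divide)
  have "1/(1+\<epsilon>) = ((1/(1+\<epsilon>)) powr s) powr (1/s)" using s \<epsilon> by (simp add: powr_inv_s')
  also have "\<dots> \<le> X powr (1/s)" unfolding iB[symmetric] using Xge B1 s by (intro powr_mono2) auto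
  finally show "1 / (1 + \<epsilon>) \<le> X powr (1/s)" .
  assume far: "(1 + \<epsilon>) * r < dd"
  have "((1 + \<epsilon>) * r) powr s \<le> dd powr s" using far s \<epsilon> r by (intro powr_mono2) auto
  then have "B * r powr s \<le> dd powr s" by (simp add: powr_mult B_def)
  then have "(B * r powr s) * (B - 1) \<le> (dd powr s) * (B - 1)"
    using B1 by (intro mult_right_mono) auto
  then have "(B * (B - 1)) * r powr s \<le> (dd powr s) * (B - 1)" by (simp add: algebra_simps)
  then have "B * (B - 1) \<le> (dd powr s) * (B - 1) / r powr s"
    using R0 by (simp add: pos_le_divide_eq)
  then have "(B * (B - 1) + 1) / B \<le> X" unfolding X_def using B1 by (simp add: divide_right_mono)
  moreover have "(B * (B - 1) + 1) / B = (1 + \<epsilon>) powr s + (1 + \<epsilon>) powr (- s) - 1"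
  proof -
    have "(B * (B - 1) + 1) / B = B + 1/B - 1" using B1 by (simp add: field_simps)
    moreover have "(1 + \<epsilon>) powr (- s) = 1/B" by (simp add: B_def powr_minus_divide)
    ultimately show ?thesis by (simp add: B_def)
  qed
  ultimately have "(1 + \<epsilon>) powr s + (1 + \<epsilon>) powr (- s) - 1 \<le> X" by simp
  moreover have "0 \<le> (1 + \<epsilon>) powr s + (1 + \<epsilon>) powr (- s) - 1"
  proof -
    have "0 < 1/B" using B1 by simp
    then have "1 \<le> B + 1/B" using B1 by linarith
    then show ?thesis by (simp add: B_def[symmetric] powr_minus_divide)
  qed
  ultimately show "((1 + \<epsilon>) powr s + (1 + \<epsilon>) powr (- s) - 1) powr (1/s) \<le> X powr (1/s)"
    using s by (intro powr_mono2) auto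
qed


context hs begin

lemma Phi_props:
  assumes l: "0 < l"
  shows "G l = ennreal (Phi f w l)" "0 < Phi f w l" "Phi f w l < 1"
proof -
  show G: "G l = ennreal (Phi f w l)" using Phi_G[OF l] by simp
  show "0 < Phi f w l" using G_pos[OF l] G by (simp add: ennreal_less_zero_iff)
  show "Phi f w l < 1" using G_lt1[OF l] G by (simp add: ennreal_less_one_iff)
qed

lemma Phi_mono:
  assumes l: "0 < l" and ll: "l \<le> l'"
  shows "Phi f w l' \<le> Phi f w l"
proof -
  have "ennreal (Phi f w l') \<le> ennreal (Phi f w l)"
    using G_mono[of l l'] l ll Phi_props(1)[of l] Phi_props(1)[of l'] by simp
  then show ?thesis using Phi_props(2)[OF l] by (simp add: ennreal_le_iff)
qed


lemma per_r:
  fixes d :: nat and P :: "(nat \<Rightarrow> real) set" and q :: "nat \<Rightarrow> real" and \<epsilon> r c :: real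
  assumes P: "finite P" and \<epsilon>: "0 < \<epsilon>" and r: "0 < r"
  defines "n \<equiv> real (card P)"
  defines "p0 \<equiv> Phi f w (1 / (1 + \<epsilon>))"
  defines "p2 \<equiv> Phi f w (((1 + \<epsilon>) powr s + (1 + \<epsilon>) powr (- s) - 1) powr (1 / s))"
  defines "k \<equiv> nat \<lceil>ln n / ln (1 / p2)\<rceil>"
  defines "L \<equiv> nat \<lceil>n powr (ln (Phi f w 1) / ln p2) / Phi f w 1\<rceil>"
  defines "R \<equiv> nat \<lceil>c * ln n\<rceil>"
  defines "bp \<equiv> (\<lambda>p. if r \<le> (1 + \<epsilon>) * nn_dist s d P q \<and> p \<notin> approx_NN s d P (\<epsilon> * (2 + \<epsilon>)) q \<and> p \<noteq> q
                     then p2 ^ k else p0 ^ k)"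
  shows "A_query_cost s D f w c d P \<epsilon> r q \<le> ennreal (real (R * L * k) + real (R * L) * (\<Sum>p\<in>P. bp p))"
proof -
  define r' where "r' = r * (1 + 1 / ((1 + \<epsilon>) powr s - 1)) powr (1 / s)"
  define h where "h = r / ((1 + \<epsilon>) powr s - 1) powr (1 / s)"
  define l2 where "l2 = ((1 + \<epsilon>) powr s + (1 + \<epsilon>) powr (- s) - 1) powr (1 / s)"
  have l2pos: "0 < l2"
  proof -
    have "1 < (1 + \<epsilon>) powr s" using s_pos \<epsilon> by (intro gr_one_powr) auto
    moreover have "0 < (1 + \<epsilon>) powr (- s)" using \<epsilon> by simp
    ultimately have "0 < (1 + \<epsilon>) powr s + (1 + \<epsilon>) powr (- s) - 1" by linarith
    then show ?thesis unfolding l2_def by simp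
  qed
  have p0pos: "0 \<le> p0" using Phi_props(2)[of "1/(1+\<epsilon>)"] \<epsilon> unfolding p0_def by simp
  have p2pos: "0 \<le> p2" using Phi_props(2)[OF l2pos] unfolding p2_def l2_def by simp
  have bp_nn: "0 \<le> bp p" for p unfolding bp_def using p0pos p2pos by simp
  have cost_eq: "A_query_cost s D f w c d P \<epsilon> r q =
    (\<integral>\<^sup>+ H. ennreal (real (R * L * k) +
            (\<Sum>ij\<in>{..<R} \<times> {..<L}.
               real (card {p \<in> P. \<forall>m<k. hashval w d (H ij m) (rescale r' (lift d 0 p)) = hashval w d (H ij m) (rescale r' (lift d h q))})))
        \<partial>(PiM ({..<R} \<times> {..<L}) (\<lambda>_. PiM {..<k} (\<lambda>_. hash_measure D d w))))"
    unfolding A_query_cost_def Let_def r'_def h_def R_def L_def k_def n_def p2_def by simp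
  have coll: "emeasure (PiM {..<k} (\<lambda>_. hash_measure D d w))
      {H \<in> space (PiM {..<k} (\<lambda>_. hash_measure D d w)). \<forall>m<k. hashval w d (H m) (rescale r' (lift d 0 p)) = hashval w d (H m) (rescale r' (lift d h q))}
      \<le> ennreal (bp p)" if p: "p \<in> P" for p
  proof -
    define X where "X = (\<Sum>i<Suc d. \<bar>rescale r' (lift d 0 p) i - rescale r' (lift d h q) i\<bar> powr s)"
    have Xeq: "X = ((ldist s d q p) powr s * ((1 + \<epsilon>) powr s - 1) / r powr s + 1) / (1 + \<epsilon>) powr s"
      unfolding X_def r'_def h_def by (rule lift_sum[OF s_pos \<epsilon> r])
    have dd0: "0 \<le> ldist s d q p" unfolding ldist_def by simp
    have lo: "1 / (1 + \<epsilon>) \<le> X powr (1/s)"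
      unfolding Xeq by (rule ll_lower(1)[OF s_pos \<epsilon> r dd0])
    have c1: "emeasure (PiM {..<k} (\<lambda>_. hash_measure D d w))
      {H \<in> space (PiM {..<k} (\<lambda>_. hash_measure D d w)). \<forall>m<k. hashval w d (H m) (rescale r' (lift d 0 p)) = hashval w d (H m) (rescale r' (lift d h q))}
      \<le> G (X powr (1/s)) ^ k"
      unfolding X_def by (rule coll_k)
    have i0: "0 < 1 / (1 + \<epsilon>)" using \<epsilon> by simp
    have g0: "G (X powr (1/s)) \<le> ennreal p0"
      using G_mono[OF less_imp_le[OF i0] lo] Phi_props(1)[OF i0] unfolding p0_def by simp
    show ?thesis
    proof (cases "r \<le> (1 + \<epsilon>) * nn_dist s d P q \<and> p \<notin> approx_NN s d P (\<epsilon> * (2 + \<epsilon>)) q \<and> p \<noteq> q")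
      case True
      then have good: "r \<le> (1 + \<epsilon>) * nn_dist s d P q" and far: "p \<notin> approx_NN s d P (\<epsilon> * (2 + \<epsilon>)) q"
        and pq: "p \<noteq> q" by auto
      have "ldist s d q p > (1 + \<epsilon> * (2 + \<epsilon>)) * nn_dist s d P q"
        using far p pq unfolding approx_NN_def nbhd_def by auto
      moreover have "(1 + \<epsilon>) * r \<le> (1 + \<epsilon> * (2 + \<epsilon>)) * nn_dist s d P q"
      proof -
        have "(1 + \<epsilon>) * r \<le> (1 + \<epsilon>) * ((1 + \<epsilon>) * nn_dist s d P q)"
          using good \<epsilon> by (intro mult_left_mono) auto
        also have "\<dots> = (1 + \<epsilon> * (2 + \<epsilon>)) * nn_dist s d P q" by (simp add: algebra_simps)
        finally show ?thesis .
      qed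
      ultimately have "(1 + \<epsilon>) * r < ldist s d q p" by linarith
      then have hi: "l2 \<le> X powr (1/s)"
        unfolding Xeq l2_def by (rule ll_lower(2)[OF s_pos \<epsilon> r dd0])
      have g2: "G (X powr (1/s)) \<le> ennreal p2"
        using G_mono[OF less_imp_le[OF l2pos] hi] Phi_props(1)[OF l2pos] unfolding p2_def l2_def by simp
      have "G (X powr (1/s)) ^ k \<le> ennreal p2 ^ k" by (rule power_mono[OF g2]) simp
      moreover have "bp p = p2 ^ k" using True unfolding bp_def by (simp only: if_True simp_thms)
      ultimately show ?thesis using c1 p2pos by (simp add: ennreal_power)
    next
      case False
      have "G (X powr (1/s)) ^ k \<le> ennreal p0 ^ k" by (rule power_mono[OF g0]) simp
      moreover have "bp p = p0 ^ k" using False unfolding bp_def by (simp only: if_False)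
      ultimately show ?thesis using c1 p0pos by (simp add: ennreal_power)
    qed
  qed
  have "A_query_cost s D f w c d P \<epsilon> r q \<le> ennreal (real (R * L * k)) + of_nat (R * L) * (\<Sum>p\<in>P. ennreal (bp p))"
    unfolding cost_eq by (rule cost_bound[OF P coll])
  also have "\<dots> = ennreal (real (R * L * k) + real (R * L) * (\<Sum>p\<in>P. bp p))"
  proof -
    have "(\<Sum>p\<in>P. ennreal (bp p)) = ennreal (\<Sum>p\<in>P. bp p)" by (rule sum_ennreal) (rule bp_nn)
    moreover have "(of_nat (R * L) :: ennreal) = ennreal (real (R * L))" by (rule ennreal_of_nat_eq_real_of_nat)
    moreover have "ennreal (real (R * L)) * ennreal (\<Sum>p\<in>P. bp p) = ennreal (real (R * L) * (\<Sum>p\<in>P. bp p))"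
      by (rule ennreal_mult''[symmetric]) (auto intro!: sum_nonneg bp_nn)
    moreover have "ennreal (real (R * L * k)) + ennreal (real (R * L) * (\<Sum>p\<in>P. bp p))
        = ennreal (real (R * L * k) + real (R * L) * (\<Sum>p\<in>P. bp p))"
      by (rule ennreal_plus[symmetric]) (auto intro!: mult_nonneg_nonneg sum_nonneg bp_nn)
    ultimately show ?thesis by (simp only:)
  qed
  finally show ?thesis .
qed

end


lemma real_nat_ceil_le: "0 \<le> x \<Longrightarrow> real (nat \<lceil>x\<rceil>) \<le> x + 1"
  by linarith

lemma final_arith:
  fixes n p0 p1 p2 c S \<epsilon> :: real
  assumes n: "1 \<le> n" and p1: "0 < p1" "p1 < 1" and p2: "0 < p2" "p2 < 1"
    and p0: "0 < p0" "p0 \<le> 1" and c: "0 < c" and S: "0 \<le> S" and \<epsilon>: "0 < \<epsilon>"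
  defines "\<rho> \<equiv> ln p1 / ln p2"
  defines "\<alpha> \<equiv> \<rho> * (1 - ln p0 / ln p1)"
  defines "k \<equiv> nat \<lceil>ln n / ln (1 / p2)\<rceil>"
  defines "L \<equiv> nat \<lceil>n powr \<rho> / p1\<rceil>"
  defines "R \<equiv> nat \<lceil>c * ln n\<rceil>"
  shows "real R * real L * (real k + 2 + 2 * S * p0 ^ k)
     \<le> 6 * (c + 1) * (1 + ln (n + 1 / \<epsilon>)) powr 2 *
        (n powr \<rho> / p1 * (1 / ln (1 / p2) + 1) + n powr \<alpha> / p1 * S)"
proof -
  define lm where "lm = ln (1 / p2)"
  define ln' where "ln' = ln n"
  have lam: "0 < lm" using p2 by (simp add: lm_def)
  have lam2: "lm = - ln p2" using p2 by (simp add: lm_def ln_div)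
  have lnn: "0 \<le> ln'" using n by (simp add: ln'_def)
  have lp1: "ln p1 < 0" using p1 by simp
  have lp2: "ln p2 < 0" using p2 by simp
  have rho: "0 \<le> \<rho>" unfolding \<rho>_def using lp1 lp2 by (simp add: divide_nonpos_neg less_imp_le)
  have npow: "1 \<le> n powr \<rho>" using n rho by (simp add: ge_one_powr_ge_zero)
  have iR: "real R \<le> (c + 1) * (1 + ln')"
  proof -
    have "real R \<le> c * ln' + 1" unfolding R_def ln'_def using c lnn by (intro real_nat_ceil_le) (simp add: ln'_def)
    also have "\<dots> \<le> (c + 1) * (1 + ln')" using c lnn by (simp add: algebra_simps)
    finally show ?thesis .
  qed
  have iL: "real L \<le> 2 * (n powr \<rho> / p1)"
  proof -
    have "real L \<le> n powr \<rho> / p1 + 1" unfolding L_def using p1 npow by (intro real_nat_ceil_le) simp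
    moreover have "1 \<le> n powr \<rho> / p1" using npow p1 by (simp add: le_divide_eq)
    ultimately show ?thesis by simp
  qed
  have kge: "ln' / lm \<le> real k" unfolding k_def ln'_def lm_def by (rule real_nat_ceiling_ge)
  have kle: "real k \<le> ln' / lm + 1" unfolding k_def ln'_def lm_def
    using lnn lam by (intro real_nat_ceil_le) (simp add: ln'_def lm_def)
  have ik2: "real k + 2 \<le> 3 * ((1 + ln') * (1 / lm + 1))"
  proof -
    have "ln' / lm \<le> (1 + ln') * (1 / lm)" using lam by (simp add: divide_right_mono)
    moreover have "0 \<le> (1 + ln') * (1 / lm)" using lam lnn by simp
    moreover have "1 \<le> 1 + ln'" using lnn by simp
    moreover have "\<And>a b y::real. a \<le> b \<Longrightarrow> 0 \<le> b \<Longrightarrow> 1 \<le> y \<Longrightarrow> a + 3 \<le> 3*b + 3*y" by linarith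
    ultimately have "ln' / lm + 3 \<le> 3 * ((1 + ln') * (1 / lm)) + 3 * (1 + ln')" by blast
    then show ?thesis using kle by (simp add: algebra_simps)
  qed
  have p0k: "n powr \<rho> * p0 ^ k \<le> n powr \<alpha>"
  proof -
    have "p0 ^ k = p0 powr real k" using p0 by (simp add: powr_realpow)
    also have "\<dots> \<le> p0 powr (ln' / lm)" using p0 kge by (intro powr_mono') auto
    also have "p0 powr (ln' / lm) = n powr (ln p0 / lm)"
      using p0 n by (simp add: powr_def ln'_def)
    finally have "n powr \<rho> * p0 ^ k \<le> n powr \<rho> * n powr (ln p0 / lm)"
      by (intro mult_left_mono) auto
    also have "\<dots> = n powr (\<rho> + ln p0 / lm)" by (simp add: powr_add)
    also have "\<rho> + ln p0 / lm = \<alpha>"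
      unfolding \<alpha>_def \<rho>_def lam2 using lp1 lp2 by (simp add: field_simps)
    finally show ?thesis .
  qed
  define X where "X = 1 + ln (n + 1 / \<epsilon>)"
  have X1: "1 + ln' \<le> X"
  proof -
    have "n \<le> n + 1/\<epsilon>" using \<epsilon> by simp
    then have "ln n \<le> ln (n + 1/\<epsilon>)" using n by (intro ln_mono) auto
    then show ?thesis by (simp add: X_def ln'_def)
  qed
  have X2: "(1 + ln') ^ 2 \<le> X powr 2"
  proof -
    have "0 < X" using X1 lnn by linarith
    then have "X powr (real (2::nat)) = X ^ 2" by (rule powr_realpow)
    moreover have "(1 + ln') ^ 2 \<le> X ^ 2" using X1 lnn by (intro power_mono) auto
    ultimately show ?thesis by simp
  qed
  define A where "A = n powr \<rho> / p1 * (1 / lm + 1)"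
  define Bt where "Bt = n powr \<alpha> / p1 * S"
  have A0: "0 \<le> A" unfolding A_def using lam p1 by simp
  have B0: "0 \<le> Bt" unfolding Bt_def using S p1 by simp
  have RL0: "0 \<le> real R * real L" by simp
  have t1: "real R * real L * (real k + 2) \<le> 6 * (c + 1) * (1 + ln') ^ 2 * A"
  proof -
    have "real R * real L * (real k + 2) \<le> ((c + 1) * (1 + ln')) * (2 * (n powr \<rho> / p1)) * (3 * ((1 + ln') * (1 / lm + 1)))"
      using iR iL ik2 lnn c p1 by (intro mult_mono) auto
    also have "\<dots> = 6 * (c + 1) * (1 + ln') ^ 2 * A"
    proof -
      have "\<And>a b M x::real. (a*b)*(2*M)*(3*(b*x)) = 6*a*b^2*(M*x)" by (simp add: power2_eq_square)
      then show ?thesis unfolding A_def by blast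
    qed
    finally show ?thesis .
  qed
  have t2: "real R * real L * (2 * S * p0 ^ k) \<le> 6 * (c + 1) * (1 + ln') ^ 2 * Bt"
  proof -
    have "real R * real L * (2 * S * p0 ^ k) \<le> ((c + 1) * (1 + ln')) * (2 * (n powr \<rho> / p1)) * (2 * S * p0 ^ k)"
      using iR iL lnn c S p0 p1 by (intro mult_mono) auto
    also have "\<dots> = 4 * (c + 1) * (1 + ln') * S / p1 * (n powr \<rho> * p0 ^ k)" by (simp add: algebra_simps)
    also have "\<dots> \<le> 4 * (c + 1) * (1 + ln') * S / p1 * n powr \<alpha>"
      using p0k c lnn S p1 by (intro mult_left_mono) auto
    also have "\<dots> = 4 * (c + 1) * (1 + ln') * Bt" by (simp add: Bt_def)
    also have "\<dots> \<le> 6 * (c + 1) * (1 + ln') ^ 2 * Bt"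
    proof -
      have "4 * (1 + ln') \<le> 6 * (1 + ln') ^ 2" using lnn by (simp add: power2_eq_square algebra_simps)
      then have "4 * (1 + ln') * ((c + 1) * Bt) \<le> 6 * (1 + ln') ^ 2 * ((c + 1) * Bt)"
        using c B0 by (intro mult_right_mono) auto
      then show ?thesis by (simp add: algebra_simps)
    qed
    finally show ?thesis .
  qed
  have "real R * real L * (real k + 2 + 2 * S * p0 ^ k) \<le> 6 * (c + 1) * (1 + ln') ^ 2 * (A + Bt)"
    using t1 t2 by (simp add: algebra_simps)
  also have "\<dots> \<le> 6 * (c + 1) * X powr 2 * (A + Bt)"
    using X2 A0 B0 c by (intro mult_right_mono mult_left_mono) auto
  finally show ?thesis by (simp add: X_def A_def Bt_def lm_def)
qed



lemma p2k_le:
  fixes n p2 :: real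
  assumes n: "1 \<le> n" and p2: "0 < p2" "p2 < 1"
  shows "n * p2 ^ nat \<lceil>ln n / ln (1 / p2)\<rceil> \<le> 1"
proof -
  define k where "k = nat \<lceil>ln n / ln (1 / p2)\<rceil>"
  have lm: "ln (1/p2) = - ln p2" using p2 by (simp add: ln_div)
  have lp2: "ln p2 < 0" using p2 by simp
  have kge: "ln n / ln (1/p2) \<le> real k" unfolding k_def by (rule real_nat_ceiling_ge)
  have "p2 ^ k = p2 powr real k" using p2 by (simp add: powr_realpow)
  also have "\<dots> \<le> p2 powr (ln n / ln (1/p2))" using p2 kge by (intro powr_mono') auto
  also have "\<dots> = exp (- ln n)" using lp2 p2 unfolding lm by (simp add: powr_def)
  also have "\<dots> = 1 / n" using n by (simp add: exp_minus inverse_eq_divide)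
  finally have "p2 ^ k \<le> 1 / n" .
  then have "n * p2 ^ k \<le> n * (1/n)" using n by (intro mult_left_mono) auto
  then show ?thesis using n unfolding k_def by simp
qed

lemma sum_bp_good:
  fixes P S :: "'a set" and q :: 'a and a b :: real and bp :: "'a \<Rightarrow> real"
  assumes P: "finite P" and S: "finite S" and a: "0 \<le> a" and b: "0 \<le> b"
    and bp: "\<And>p. p \<in> P \<Longrightarrow> bp p \<le> (if p \<in> S \<or> p = q then a else 0) + b"
  shows "(\<Sum>p\<in>P. bp p) \<le> a * (real (card S) + 1) + real (card P) * b"
proof -
  have "(\<Sum>p\<in>P. bp p) \<le> (\<Sum>p\<in>P. (if p \<in> S \<or> p = q then a else 0) + b)"
    by (rule sum_mono) (rule bp)
  also have "\<dots> = (\<Sum>p\<in>P. if p \<in> S \<or> p = q then a else 0) + real (card P) * b"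
    by (simp add: sum.distrib)
  also have "(\<Sum>p\<in>P. if p \<in> S \<or> p = q then a else 0) = (\<Sum>p\<in>{p \<in> P. p \<in> S \<or> p = q}. a)"
    using P by (rule sum.inter_filter[symmetric])
  also have "\<dots> = a * real (card {p \<in> P. p \<in> S \<or> p = q})" by simp
  also have "\<dots> \<le> a * (real (card S) + 1)"
  proof -
    have "{p \<in> P. p \<in> S \<or> p = q} \<subseteq> insert q S" by auto
    then have "card {p \<in> P. p \<in> S \<or> p = q} \<le> card (insert q S)" using S by (intro card_mono) auto
    also have "\<dots> \<le> card S + 1" using S by (simp add: card_insert_if)
    finally have "real (card {p \<in> P. p \<in> S \<or> p = q}) \<le> real (card S) + 1" by linarith
    then show ?thesis using a by (intro mult_left_mono) auto
  qed
  finally show ?thesis by simp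
qed


context hs begin

lemma main_bound:
  fixes d :: nat and P :: "(nat \<Rightarrow> real) set" and \<epsilon> c :: real and q :: "nat \<Rightarrow> real" and T :: "real pmf"
  assumes P: "finite P" and Pq: "P - {q} \<noteq> {}" and \<epsilon>: "0 < \<epsilon>" and c: "0 < c"
    and Tfin: "finite (set_pmf T)" and Tpos: "\<forall>r\<in>set_pmf T. 0 < r"
    and Tgood: "measure_pmf.prob T {r. nn_dist s d P q \<le> r \<and> r \<le> (1 + \<epsilon>) * nn_dist s d P q}
         \<ge> 1 - 1 / real (card P)"
  defines "n \<equiv> real (card P)"
  defines "p0 \<equiv> Phi f w (1 / (1 + \<epsilon>))"
  defines "p1 \<equiv> Phi f w 1"
  defines "p2 \<equiv> Phi f w (((1 + \<epsilon>) powr s + (1 + \<epsilon>) powr (- s) - 1) powr (1 / s))"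
  defines "k \<equiv> nat \<lceil>ln n / ln (1 / p2)\<rceil>"
  defines "L \<equiv> nat \<lceil>n powr (ln p1 / ln p2) / p1\<rceil>"
  defines "R \<equiv> nat \<lceil>c * ln n\<rceil>"
  defines "S \<equiv> approx_NN s d P (\<epsilon> * (2 + \<epsilon>)) q"
  shows "step2_time s D f w c d P \<epsilon> T q \<le> ennreal (real R * real L * (real k + 2 + 2 * real (card S) * p0 ^ k))"
    and "1 \<le> n" "0 < p0" "p0 \<le> 1" "0 < p1" "p1 < 1" "0 < p2" "p2 < 1" "1 \<le> card S"
proof -
  define nnd where "nnd = nn_dist s d P q"
  define l2 where "l2 = ((1 + \<epsilon>) powr s + (1 + \<epsilon>) powr (- s) - 1) powr (1 / s)"
  have l2pos: "0 < l2"
  proof -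
    have "1 < (1 + \<epsilon>) powr s" using s_pos \<epsilon> by (intro gr_one_powr) auto
    moreover have "0 < (1 + \<epsilon>) powr (- s)" using \<epsilon> by simp
    ultimately have "0 < (1 + \<epsilon>) powr s + (1 + \<epsilon>) powr (- s) - 1" by linarith
    then show ?thesis unfolding l2_def by simp
  qed
  have i0: "0 < 1 / (1 + \<epsilon>)" using \<epsilon> by simp
  show n1: "1 \<le> n"
  proof -
    have "P \<noteq> {}" using Pq by auto
    then have "0 < card P" using P by (simp add: card_gt_0_iff)
    then show ?thesis unfolding n_def by simp
  qed
  show p0pos: "0 < p0" unfolding p0_def by (rule Phi_props(2)[OF i0])
  show p0le: "p0 \<le> 1" unfolding p0_def using Phi_props(3)[OF i0] by simp
  show p1pos: "0 < p1" unfolding p1_def by (rule Phi_props(2)) simp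
  show p1lt: "p1 < 1" unfolding p1_def by (rule Phi_props(3)) simp
  show p2pos: "0 < p2" unfolding p2_def using Phi_props(2)[OF l2pos] by (simp add: l2_def)
  show p2lt: "p2 < 1" unfolding p2_def using Phi_props(3)[OF l2pos] by (simp add: l2_def)
  have nnd0: "0 \<le> nnd"
  proof -
    have "finite (ldist s d q ` (P - {q}))" using P by simp
    moreover have "ldist s d q ` (P - {q}) \<noteq> {}" using Pq by simp
    ultimately have "nnd \<in> ldist s d q ` (P - {q})" unfolding nnd_def nn_dist_def by (rule Min_in)
    then show ?thesis by (auto simp: ldist_def)
  qed
  show S1: "1 \<le> card S"
  proof -
    have "finite (ldist s d q ` (P - {q}))" using P by simp
    moreover have "ldist s d q ` (P - {q}) \<noteq> {}" using Pq by simp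
    ultimately have "nnd \<in> ldist s d q ` (P - {q})" unfolding nnd_def nn_dist_def by (rule Min_in)
    then obtain p where p: "p \<in> P - {q}" "ldist s d q p = nnd" by auto
    have "nnd \<le> (1 + \<epsilon> * (2 + \<epsilon>)) * nnd" using nnd0 \<epsilon> by (simp add: algebra_simps)
    then have "p \<in> S" using p unfolding S_def approx_NN_def nbhd_def nnd_def by auto
    moreover have "finite S" using P unfolding S_def approx_NN_def nbhd_def by simp
    ultimately have "S \<noteq> {}" "finite S" by auto
    then show ?thesis by (simp add: Suc_le_eq card_gt_0_iff)
  qed
  have fS: "finite S" using P unfolding S_def approx_NN_def nbhd_def by simp
  have p0k: "p0 ^ k \<le> 1" using p0pos p0le by (simp add: power_le_one)
  have p2k: "0 \<le> p2 ^ k" "p2 ^ k \<le> 1" using p2pos p2lt by (auto simp: power_le_one)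
  have np2k: "n * p2 ^ k \<le> 1" unfolding k_def by (rule p2k_le[OF n1 p2pos p2lt])
  define Good where "Good = {r. nnd \<le> r \<and> r \<le> (1 + \<epsilon>) * nnd}"
  define Bg where "Bg = real (R * L * k) + real (R * L) * (2 * real (card S) * p0 ^ k + 1)"
  define Bb where "Bb = real (R * L) * n"
  have Bb0: "0 \<le> Bb" unfolding Bb_def n_def by simp
  have Bg0: "0 \<le> Bg" unfolding Bg_def using p0pos by simp
  have cost_r: "A_query_cost s D f w c d P \<epsilon> r q \<le> ennreal Bg + ennreal Bb * indicator (- Good) r"
    if r: "r \<in> set_pmf T" for r
  proof -
    have rpos: "0 < r" using Tpos r by auto
    define bp where "bp = (\<lambda>p. if r \<le> (1 + \<epsilon>) * nn_dist s d P q \<and> p \<notin> approx_NN s d P (\<epsilon> * (2 + \<epsilon>)) q \<and> p \<noteq> q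
                     then p2 ^ k else p0 ^ k)"
    have pr: "A_query_cost s D f w c d P \<epsilon> r q \<le> ennreal (real (R * L * k) + real (R * L) * (\<Sum>p\<in>P. bp p))"
      unfolding bp_def R_def L_def k_def n_def p1_def p2_def p0_def by (rule per_r[OF P \<epsilon> rpos])
    have bp1: "bp p \<le> 1" for p unfolding bp_def using p0k p2k by auto
    have sum_n: "(\<Sum>p\<in>P. bp p) \<le> n"
    proof -
      have "(\<Sum>p\<in>P. bp p) \<le> (\<Sum>p\<in>P. 1)" by (rule sum_mono) (rule bp1)
      then show ?thesis by (simp add: n_def)
    qed
    show ?thesis
    proof (cases "r \<in> Good")
      case True
      then have good: "r \<le> (1 + \<epsilon>) * nn_dist s d P q" by (simp add: Good_def nnd_def)
      have "(\<Sum>p\<in>P. bp p) \<le> p0 ^ k * (real (card S) + 1) + real (card P) * p2 ^ k"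
      proof (rule sum_bp_good[OF P fS])
        show "0 \<le> p0 ^ k" using p0pos by simp
        show "0 \<le> p2 ^ k" by (rule p2k(1))
        fix p assume "p \<in> P"
        show "bp p \<le> (if p \<in> S \<or> p = q then p0 ^ k else 0) + p2 ^ k"
          using good p0pos p2k unfolding bp_def S_def by auto
      qed
      also have "\<dots> \<le> 2 * real (card S) * p0 ^ k + 1"
      proof -
        have "p0 ^ k * (real (card S) + 1) \<le> p0 ^ k * (2 * real (card S))"
          using S1 p0pos by (intro mult_left_mono) auto
        then show ?thesis using np2k unfolding n_def by (simp add: algebra_simps)
      qed
      finally have "real (R * L) * (\<Sum>p\<in>P. bp p) \<le> real (R * L) * (2 * real (card S) * p0 ^ k + 1)"
        by (intro mult_left_mono) auto
      then have "A_query_cost s D f w c d P \<epsilon> r q \<le> ennreal Bg"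
        using pr unfolding Bg_def by (meson add_left_mono ennreal_leI order.trans)
      then show ?thesis using True by simp
    next
      case False
      have "real (R * L) * (\<Sum>p\<in>P. bp p) \<le> real (R * L) * n" using sum_n by (intro mult_left_mono) auto
      moreover have "real (R * L * k) \<le> Bg" unfolding Bg_def using p0pos by simp
      ultimately have "real (R * L * k) + real (R * L) * (\<Sum>p\<in>P. bp p) \<le> Bg + Bb" unfolding Bb_def by linarith
      then have "A_query_cost s D f w c d P \<epsilon> r q \<le> ennreal (Bg + Bb)"
        using pr by (meson ennreal_leI order.trans)
      then show ?thesis using False Bg0 Bb0 by (simp add: ennreal_plus)
    qed
  qed
  have "step2_time s D f w c d P \<epsilon> T q \<le> (\<integral>\<^sup>+ r. ennreal Bg + ennreal Bb * indicator (- Good) r \<partial>measure_pmf T)"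
    unfolding step2_time_def
    by (rule nn_integral_mono_AE) (auto simp: AE_measure_pmf_iff intro: cost_r)
  also have "\<dots> = ennreal Bg + ennreal Bb * emeasure (measure_pmf T) (- Good)"
  proof -
    have "(\<integral>\<^sup>+ r. ennreal Bg + ennreal Bb * indicator (- Good) r \<partial>measure_pmf T)
        = (\<integral>\<^sup>+ r. ennreal Bg \<partial>measure_pmf T) + (\<integral>\<^sup>+ r. ennreal Bb * indicator (- Good) r \<partial>measure_pmf T)"
      by (rule nn_integral_add) auto
    also have "(\<integral>\<^sup>+ r. ennreal Bg \<partial>measure_pmf T) = ennreal Bg" by simp
    also have "(\<integral>\<^sup>+ r. ennreal Bb * indicator (- Good) r \<partial>measure_pmf T) = ennreal Bb * emeasure (measure_pmf T) (- Good)"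
      by (rule nn_integral_cmult_indicator) simp
    finally show ?thesis .
  qed
  also have "\<dots> \<le> ennreal Bg + ennreal (real (R * L))"
  proof -
    have "measure_pmf.prob T (- Good) = 1 - measure_pmf.prob T Good"
      using measure_pmf.prob_compl[of Good T] by (simp add: Compl_eq_Diff_UNIV)
    also have "\<dots> \<le> 1 / n" using Tgood unfolding Good_def nnd_def n_def by simp
    finally have pb: "measure_pmf.prob T (- Good) \<le> 1 / n" .
    have "ennreal Bb * emeasure (measure_pmf T) (- Good) = ennreal (Bb * measure_pmf.prob T (- Good))"
      by (simp add: measure_pmf.emeasure_eq_measure ennreal_mult'' Bb0)
    also have "\<dots> \<le> ennreal (Bb * (1 / n))" using pb Bb0 by (intro ennreal_leI mult_left_mono) auto
    also have "Bb * (1 / n) = real (R * L)" unfolding Bb_def using n1 by simp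
    finally show ?thesis by (intro add_left_mono)
  qed
  also have "\<dots> = ennreal (Bg + real (R * L))" using Bg0 by (simp add: ennreal_plus)
  also have "Bg + real (R * L) = real R * real L * (real k + 2 + 2 * real (card S) * p0 ^ k)"
    unfolding Bg_def by (simp add: algebra_simps)
  finally show "step2_time s D f w c d P \<epsilon> T q \<le> ennreal (real R * real L * (real k + 2 + 2 * real (card S) * p0 ^ k))" .
qed

end

theorem lemma5:
  fixes s w c :: real and D :: "real measure" and f :: "real \<Rightarrow> real"
  assumes "0 < s" and "s \<le> 2" and "s_stable s D" and "abs_density D f"
    and "0 < w" and "0 < c"
  shows "\<exists>C e. 0 < C \<and>
    (\<forall>(d::nat) (P::(nat \<Rightarrow> real) set) (\<epsilon>::real) (q::nat \<Rightarrow> real) (T::real pmf).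
       finite P \<and> P - {q} \<noteq> {} \<and> (\<forall>p\<in>P. \<forall>i\<ge>d. p i = 0) \<and> (\<forall>i\<ge>d. q i = 0) \<and> 0 < \<epsilon> \<and>
       finite (set_pmf T) \<and> (\<forall>r\<in>set_pmf T. 0 < r) \<and>
       measure_pmf.prob T {r. nn_dist s d P q \<le> r \<and> r \<le> (1 + \<epsilon>) * nn_dist s d P q}
         \<ge> 1 - 1 / real (card P)
     \<longrightarrow> (let n = real (card P);
              p0 = Phi f w (1 / (1 + \<epsilon>));
              p1 = Phi f w 1;
              p2' = Phi f w (((1 + \<epsilon>) powr s + (1 + \<epsilon>) powr (- s) - 1) powr (1 / s));
              \<rho>' = ln p1 / ln p2';
              \<alpha> = \<rho>' * (1 - ln p0 / ln p1)
          in step2_time s D f w c d P \<epsilon> T q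
             \<le> ennreal (C * (1 + ln (n + 1 / \<epsilon>)) powr e *
                  (n powr \<rho>' / p1 * (1 / ln (1 / p2') + 1)
                   + n powr \<alpha> / p1 * real (card (approx_NN s d P (\<epsilon> * (2 + \<epsilon>)) q))))))"
proof -
  interpret hs s w D f by unfold_locales (use assms in auto)
  have c: "0 < c" by fact
  show ?thesis
  proof (rule exI[of _ "6 * (c + 1)"], rule exI[of _ "2::real"], intro conjI allI impI)
    show "0 < 6 * (c + 1)" using c by simp
    fix d :: nat and P :: "(nat \<Rightarrow> real) set" and \<epsilon> :: real and q :: "nat \<Rightarrow> real" and T :: "real pmf"
    assume H: "finite P \<and> P - {q} \<noteq> {} \<and> (\<forall>p\<in>P. \<forall>i\<ge>d. p i = 0) \<and> (\<forall>i\<ge>d. q i = 0) \<and> 0 < \<epsilon> \<and>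
       finite (set_pmf T) \<and> (\<forall>r\<in>set_pmf T. 0 < r) \<and>
       measure_pmf.prob T {r. nn_dist s d P q \<le> r \<and> r \<le> (1 + \<epsilon>) * nn_dist s d P q}
         \<ge> 1 - 1 / real (card P)"
    then have P: "finite P" and Pq: "P - {q} \<noteq> {}" and \<epsilon>: "0 < \<epsilon>" and Tfin: "finite (set_pmf T)"
      and Tpos: "\<forall>r\<in>set_pmf T. 0 < r"
      and Tgood: "measure_pmf.prob T {r. nn_dist s d P q \<le> r \<and> r \<le> (1 + \<epsilon>) * nn_dist s d P q}
         \<ge> 1 - 1 / real (card P)" by auto
    note mb = main_bound[OF P Pq \<epsilon> c Tfin Tpos Tgood]
    have fa: "real (nat \<lceil>c * ln (real (card P))\<rceil>) *
      real (nat \<lceil>real (card P) powr (ln (Phi f w 1) / ln (Phi f w (((1 + \<epsilon>) powr s + (1 + \<epsilon>) powr (- s) - 1) powr (1 / s)))) / Phi f w 1\<rceil>) *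
      (real (nat \<lceil>ln (real (card P)) / ln (1 / Phi f w (((1 + \<epsilon>) powr s + (1 + \<epsilon>) powr (- s) - 1) powr (1 / s)))\<rceil>) + 2 +
       2 * real (card (approx_NN s d P (\<epsilon> * (2 + \<epsilon>)) q)) * Phi f w (1 / (1 + \<epsilon>)) ^ nat \<lceil>ln (real (card P)) / ln (1 / Phi f w (((1 + \<epsilon>) powr s + (1 + \<epsilon>) powr (- s) - 1) powr (1 / s)))\<rceil>)
      \<le> 6 * (c + 1) * (1 + ln (real (card P) + 1 / \<epsilon>)) powr 2 *
        (real (card P) powr (ln (Phi f w 1) / ln (Phi f w (((1 + \<epsilon>) powr s + (1 + \<epsilon>) powr (- s) - 1) powr (1 / s)))) / Phi f w 1 *
          (1 / ln (1 / Phi f w (((1 + \<epsilon>) powr s + (1 + \<epsilon>) powr (- s) - 1) powr (1 / s))) + 1) +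
         real (card P) powr (ln (Phi f w 1) / ln (Phi f w (((1 + \<epsilon>) powr s + (1 + \<epsilon>) powr (- s) - 1) powr (1 / s))) * (1 - ln (Phi f w (1 / (1 + \<epsilon>))) / ln (Phi f w 1))) / Phi f w 1 *
          real (card (approx_NN s d P (\<epsilon> * (2 + \<epsilon>)) q)))"
      by (rule final_arith) (use mb(2-9) c \<epsilon> in auto)
    show "let n = real (card P);
              p0 = Phi f w (1 / (1 + \<epsilon>));
              p1 = Phi f w 1;
              p2' = Phi f w (((1 + \<epsilon>) powr s + (1 + \<epsilon>) powr (- s) - 1) powr (1 / s));
              \<rho>' = ln p1 / ln p2';
              \<alpha> = \<rho>' * (1 - ln p0 / ln p1)
          in step2_time s D f w c d P \<epsilon> T q
             \<le> ennreal (6 * (c + 1) * (1 + ln (n + 1 / \<epsilon>)) powr 2 *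
                  (n powr \<rho>' / p1 * (1 / ln (1 / p2') + 1)
                   + n powr \<alpha> / p1 * real (card (approx_NN s d P (\<epsilon> * (2 + \<epsilon>)) q))))"
      unfolding Let_def using order.trans[OF mb(1) ennreal_leI[OF fa]] .
  qed
qed


end
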